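(* Let $G=(V,E)$ be a graph with nonnegative edge lengths $l_e$, root $r$, and integer demands $d_v>0$ on a set of demand nodes, with total demand $D$. Fix $\epsilon>0$, $\gamma>1$, $\delta>1$, let $K=\lceil \log_{1+\epsilon} D\rceil$, $M_i=(1+\epsilon)^i$, $A_i(x)=\min\{x,M_i\}$, and let $T_i^*$ be an optimal routing tree for $A_i$ ($0\le i\le K$). Run the following procedure: (1) for each $i$ let $T_i$ be a routing tree returned by a deterministic $\lambda$-approximation algorithm for SSRoB with cost function $A_i$; (2) for $i=1,\dots,K$ in increasing order, if $A_i(T_{i-1})<A_i(T_i)$ set $T_i\leftarrow T_{i-1}$; (3) for $i=K-1,\dots,0$ in decreasing order, if $A_i(T_{i+1})<A_i(T_i)$ set $T_i\leftarrow T_{i+1}$; (4) compute the rent cost $R_i$ and normalized buy cost $B_i$ of each resulting $T_i$; (5) set $L_B=\emptyset$, $B=\infty$, and for $i=0,\dots,K$ in increasing order, if $B_i<B/\gamma$ then add $i$ to $L_B$ and set $B\leftarrow B_i$; (6) set $L=\emptyset$, $R=\infty$, and for each $i\in L_B$ in decreasing order, if $R_i<R/\delta$ then add $i$ to $L$ and set $R\leftarrow R_i$. Suppose there exist a routing tree $T$ and constants $c_B,c_R$ such that for every $i\in L$ there is a partition of the edges of $T$ into two sets $T_{B_i}$ and $T_{R_i}$ with $A_0(T_{B_i})\le c_B B_i$ and $A_K(T_{R_i})\le c_R R_i$. Then for all $k\in\{0,\dots,K\}$, $A_k(T)\le \max\{c_B\gamma,\,c_R\delta\}\,\lambda\, A_k(T_k^*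 )$.
   Context: A routing tree is a tree in $G$ containing $r$ and all demand nodes; each demand node $v$ sends $d_v$ units of flow to $r$ along its unique tree path, and $x_e$ denotes the total flow on edge $e$. For a function $f$ and a routing tree $T$, $f(T)=\sum_{e\in T} l_e f(x_e)$; for a subset $S$ of edges of $T$, $f(S)=\sum_{e\in S} l_e f(x_e)$ with $x_e$ the flows in $T$. The single-sink rent-or-buy (SSRoB) problem with parameter $M$ is to find a routing tree minimizing $A(T)$ for $A(x)=\min\{x,M\}$; a $\lambda$-approximation algorithm returns a routing tree of cost at most $\lambda$ times optimal. For a routing tree $T_i$ with flows $x_e$, its rent cost is $R_i=\sum_{e\in T_i,\,x_e<M_i} l_e A_i(x_e)$ and its normalized buy cost is $B_i=\sum_{e\in T_i,\,x_e\ge M_i} l_e$. *)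

theory Defs
  imports Complex_Main
begin

text \<open>Undirected edges are two-element vertex sets.  Connectivity of vertices u, w
using only the edges of the edge set S (reflexive-transitive closure).\<close>
definition conn :: "'a set set \<Rightarrow> 'a \<Rightarrow> 'a \<Rightarrow> bool" where
  "conn S u w \<longleftrightarrow> (u, w) \<in> {(a, b). {a, b} \<in> S}\<^sup>*"

text \<open>Routing tree: a tree in G (edges from E, connected, acyclic = every edge is a bridge)
containing the root r and all demand nodes.\<close>
definition routing_tree :: "'a set set \<Rightarrow> 'a \<Rightarrow> 'a set \<Rightarrow> 'a set set \<Rightarrow> bool" where
  "routing_tree E r Dem T \<longleftrightarrow>
     T \<subseteq> E \<and> finite T \<and>
     (\<forall>v\<in>Dem. conn T v r) \<and>
     (\<forall>e\<in>T. \<forall>u\<in>e. conn T u r) \<and>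
     (\<forall>e\<in>T. \<forall>u\<in>e. \<forall>w\<in>e. u \<noteq> w \<longrightarrow> \<not> conn (T - {e}) u w)"

text \<open>Flow on edge e of tree T: total demand of the demand nodes whose (unique) tree path
to r uses e, i.e. which are separated from r by deleting e.\<close>
definition flow :: "'a \<Rightarrow> 'a set \<Rightarrow> ('a \<Rightarrow> nat) \<Rightarrow> 'a set set \<Rightarrow> 'a set \<Rightarrow> real" where
  "flow r Dem d T e = (\<Sum>v\<in>Dem. if conn (T - {e}) v r then 0 else real (d v))"

definition costS :: "'a \<Rightarrow> 'a set \<Rightarrow> ('a \<Rightarrow> nat) \<Rightarrow> ('a set \<Rightarrow> real) \<Rightarrow> (real \<Rightarrow> real)
      \<Rightarrow> 'a set set \<Rightarrow> 'a set set \<Rightarrow> real" where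
  "costS r Dem d l f T S = (\<Sum>e\<in>S. l e * f (flow r Dem d T e))"

abbreviation cost where
  "cost r Dem d l f T \<equiv> costS r Dem d l f T T"

definition Mth :: "real \<Rightarrow> nat \<Rightarrow> real" where
  "Mth \<epsilon> i = (1 + \<epsilon>) ^ i"

definition Acost :: "real \<Rightarrow> nat \<Rightarrow> real \<Rightarrow> real" where
  "Acost \<epsilon> i x = min x (Mth \<epsilon> i)"

fun fwd :: "(nat \<Rightarrow> 'a set set \<Rightarrow> real) \<Rightarrow> (nat \<Rightarrow> 'a set set) \<Rightarrow> nat \<Rightarrow> 'a set set" where
  "fwd C T0 0 = T0 0"
| "fwd C T0 (Suc i) = (if C (Suc i) (fwd C T0 i) < C (Suc i) (T0 (Suc i))
                        then fwd C T0 i else T0 (Suc i))"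

text \<open>Step (3): backward pass, i = K-1..0 decreasing, in place;
  bwd C T1 K n is the tree at index K - n.\<close>
fun bwd :: "(nat \<Rightarrow> 'a set set \<Rightarrow> real) \<Rightarrow> (nat \<Rightarrow> 'a set set) \<Rightarrow> nat \<Rightarrow> nat \<Rightarrow> 'a set set" where
  "bwd C T1 K 0 = T1 K"
| "bwd C T1 K (Suc n) = (if C (K - Suc n) (bwd C T1 K n) < C (K - Suc n) (T1 (K - Suc n))
                          then bwd C T1 K n else T1 (K - Suc n))"

definition final_trees :: "(nat \<Rightarrow> 'a set set \<Rightarrow> real) \<Rightarrow> (nat \<Rightarrow> 'a set set) \<Rightarrow> nat \<Rightarrow> nat \<Rightarrow> 'a set set" where
  "final_trees C T0 K i = bwd C (fwd C T0) K (K - i)"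

text \<open>Steps (5),(6): scan indices in the given order, with current threshold
  (None = infinity); select i if val i < threshold / c and update the threshold.\<close>
fun scan :: "(nat \<Rightarrow> real) \<Rightarrow> real \<Rightarrow> real option \<Rightarrow> nat list \<Rightarrow> nat list" where
  "scan f c b [] = []"
| "scan f c b (i # is) =
     (if (case b of None \<Rightarrow> True | Some t \<Rightarrow> f i < t / c)
      then i # scan f c (Some (f i)) is else scan f c b is)"

end

theory Submission
  imports Defs
begin


lemma scan_subset: "set (scan f c b xs) \<subseteq> set xs"
  by (induction xs arbitrary: b) auto

lemma scan_sorted: "sorted_wrt Q xs \<Longrightarrow> sorted_wrt Q (scan f c b xs)"
proof (induction xs arbitrary: b)
  case Nil then show ?case by simp
next
  case (Cons y ys)
  then show ?case using scan_subset[of f c _ ys] by auto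
qed

lemma scan_cover:
  assumes "c \<ge> 1" "\<forall>z\<in>set xs. f z \<ge> 0" "sorted_wrt Q xs" "\<forall>z. Q z z" "x \<in> set xs"
  shows "(\<exists>j\<in>set (scan f c b xs). Q j x \<and> f j \<le> c * f x) \<or> (\<exists>t. b = Some t \<and> t \<le> c * f x)"
  using assms
proof (induction xs arbitrary: b)
  case Nil then show ?case by simp
next
  case (Cons y ys)
  define sel where "sel = (case b of None \<Rightarrow> True | Some t \<Rightarrow> f y < t / c)"
  define b' where "b' = (if sel then Some (f y) else b)"
  have sc: "scan f c b (y # ys) = (if sel then y # scan f c (Some (f y)) ys else scan f c b ys)"
    by (simp add: sel_def)
  have nsel: "\<not> sel \<Longrightarrow> \<exists>t. b = Some t \<and> t \<le> c * f y"
  proof -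
    assume "\<not> sel"
    then obtain t where t: "b = Some t" "\<not> f y < t / c" by (cases b) (auto simp: sel_def)
    then have "t / c \<le> f y" by simp
    then have "t \<le> c * f y" using Cons.prems(1) by (simp add: divide_le_eq mult.commute)
    with t show ?thesis by blast
  qed
  show ?case
  proof (cases "x = y")
    case True
    show ?thesis
    proof (cases sel)
      case True
      have "f y \<le> c * f y" using Cons.prems(1,2)
        by (metis list.set_intros(1) mult_le_cancel_right1 order_less_le_trans zero_less_one not_le)
      then show ?thesis using True \<open>x = y\<close> sc Cons.prems(4) by auto
    next
      case False
      then show ?thesis using nsel \<open>x = y\<close> by auto
    qed
  next
    case False
    then have xys: "x \<in> set ys" using Cons.prems(5) by simp
    have IH: "(\<exists>j\<in>set (scan f c b' ys). Q j x \<and> f j \<le> c * f x) \<or> (\<exists>t. b' = Some t \<and> t \<le> c * f x)"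
      using Cons.IH[of b'] Cons.prems xys by auto
    show ?thesis
    proof (cases sel)
      case True
      have "Q y x" using Cons.prems(3) xys by simp
      then show ?thesis using IH True sc unfolding b'_def by auto
    next
      case False
      then show ?thesis using IH sc unfolding b'_def by auto
    qed
  qed
qed

lemma edge_a:
  fixes a x M1 M2 :: real
  assumes "a \<ge> 0" "x \<ge> 0" "0 < M1" "M1 < M2"
  shows "(M2-M1) * (if x \<ge> M2 then a else 0) \<le> a*min x M2 - a*min x M1"
    and "a*min x M2 - a*min x M1 \<le> (M2-M1) * (if x \<ge> M1 then a else 0)"
  using assms apply (auto simp: min_def algebra_simps)
  by (smt (verit) mult.commute mult_left_mono)+

lemma edge_b:
  fixes a x M1 M2 :: real
  assumes "a \<ge> 0" "x \<ge> 0" "0 < M1" "M1 < M2"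
  shows "(1/M1 - 1/M2) * (if x < M1 then a * min x M1 else 0) \<le> a*min x M1/M1 - a*min x M2/M2"
    and "a*min x M1/M1 - a*min x M2/M2 \<le> (1/M1-1/M2) * (if x < M2 then a*min x M2 else 0)"
proof -
  have p1: "a*x/M1 - a*x/M2 = (1/M1 - 1/M2) * (a*x)" by (simp add: algebra_simps)
  show "(1/M1 - 1/M2) * (if x < M1 then a * min x M1 else 0) \<le> a*min x M1/M1 - a*min x M2/M2"
  proof (cases "x < M1")
    case True then show ?thesis using assms p1 by (simp add: min_def)
  next
    case False
    then have "a * min x M1 / M1 = a" using assms by (simp add: min_def)
    moreover have "a * min x M2 / M2 \<le> a" using assms
      by (simp add: min_def divide_le_eq mult_left_mono)
    ultimately show ?thesis using False by simp
  qed
  show "a*min x M1/M1 - a*min x M2/M2 \<le> (1/M1-1/M2) * (if x < M2 then a*min x M2 else 0)"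
  proof (cases "x < M2")
    case True
    have "a * min x M1 / M1 \<le> a * x / M1" using assms
      by (simp add: divide_right_mono mult_left_mono)
    then show ?thesis using True assms p1 by (simp add: min_def[of x M2] algebra_simps)
  next
    case False
    then have "a * min x M1 / M1 = a" "a * min x M2 / M2 = a" using assms by (simp_all add: min_def)
    then show ?thesis using False by simp
  qed
qed

lemma mono_B_R:
  fixes S S' :: "'e set" and l x x' :: "'e \<Rightarrow> real" and M1 M2 :: real
  assumes fin: "finite S" "finite S'"
    and nn: "\<forall>e\<in>S. l e \<ge> 0 \<and> x e \<ge> 0" "\<forall>e\<in>S'. l e \<ge> 0 \<and> x' e \<ge> 0"
    and M: "0 < M1" "M1 < M2"
    and o1: "(\<Sum>e\<in>S. l e * min (x e) M1) \<le> (\<Sum>e\<in>S'. l e * min (x' e) M1)"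
    and o2: "(\<Sum>e\<in>S'. l e * min (x' e) M2) \<le> (\<Sum>e\<in>S. l e * min (x e) M2)"
  shows "(\<Sum>e\<in>{e\<in>S'. x' e \<ge> M2}. l e) \<le> (\<Sum>e\<in>{e\<in>S. x e \<ge> M1}. l e)"
    and "(\<Sum>e\<in>{e\<in>S. x e < M1}. l e * min (x e) M1) \<le> (\<Sum>e\<in>{e\<in>S'. x' e < M2}. l e * min (x' e) M2)"
proof -
  have b1: "(M2-M1) * (\<Sum>e\<in>{e\<in>S'. x' e \<ge> M2}. l e)
      \<le> (\<Sum>e\<in>S'. l e * min (x' e) M2) - (\<Sum>e\<in>S'. l e * min (x' e) M1)"
    unfolding sum.inter_filter[OF fin(2)] sum_distrib_left sum_subtractf[symmetric]
    by (rule sum_mono) (use nn(2) M edge_a(1) in auto)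
  have b2: "(\<Sum>e\<in>S. l e * min (x e) M2) - (\<Sum>e\<in>S. l e * min (x e) M1)
      \<le> (M2-M1) * (\<Sum>e\<in>{e\<in>S. x e \<ge> M1}. l e)"
    unfolding sum.inter_filter[OF fin(1)] sum_distrib_left sum_subtractf[symmetric]
    by (rule sum_mono) (use nn(1) M edge_a(2) in auto)
  have "(M2-M1) * (\<Sum>e\<in>{e\<in>S'. x' e \<ge> M2}. l e) \<le> (M2-M1) * (\<Sum>e\<in>{e\<in>S. x e \<ge> M1}. l e)"
    using b1 b2 o1 o2 by linarith
  then show "(\<Sum>e\<in>{e\<in>S'. x' e \<ge> M2}. l e) \<le> (\<Sum>e\<in>{e\<in>S. x e \<ge> M1}. l e)"
    using M by simp
  have c1: "(1/M1-1/M2) * (\<Sum>e\<in>{e\<in>S. x e < M1}. l e * min (x e) M1)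
      \<le> (\<Sum>e\<in>S. l e * min (x e) M1)/M1 - (\<Sum>e\<in>S. l e * min (x e) M2)/M2"
    unfolding sum.inter_filter[OF fin(1)] sum_distrib_left sum_divide_distrib sum_subtractf[symmetric]
    by (rule sum_mono) (use nn(1) M edge_b(1) in auto)
  have c2: "(\<Sum>e\<in>S'. l e * min (x' e) M1)/M1 - (\<Sum>e\<in>S'. l e * min (x' e) M2)/M2
      \<le> (1/M1-1/M2) * (\<Sum>e\<in>{e\<in>S'. x' e < M2}. l e * min (x' e) M2)"
    unfolding sum.inter_filter[OF fin(2)] sum_distrib_left sum_divide_distrib sum_subtractf[symmetric]
    by (rule sum_mono) (use nn(2) M edge_b(2) in auto)
  have "(\<Sum>e\<in>S. l e * min (x e) M1)/M1 \<le> (\<Sum>e\<in>S'. l e * min (x' e) M1)/M1"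
    using o1 M by (simp add: divide_right_mono)
  moreover have "(\<Sum>e\<in>S'. l e * min (x' e) M2)/M2 \<le> (\<Sum>e\<in>S. l e * min (x e) M2)/M2"
    using o2 M by (simp add: divide_right_mono)
  ultimately have "(1/M1-1/M2) * (\<Sum>e\<in>{e\<in>S. x e < M1}. l e * min (x e) M1)
      \<le> (1/M1-1/M2) * (\<Sum>e\<in>{e\<in>S'. x' e < M2}. l e * min (x' e) M2)"
    using c1 c2 by linarith
  moreover have "1/M1 - 1/M2 > 0" using M by (simp add: frac_less2)
  ultimately show "(\<Sum>e\<in>{e\<in>S. x e < M1}. l e * min (x e) M1) \<le> (\<Sum>e\<in>{e\<in>S'. x' e < M2}. l e * min (x' e) M2)"
    by simp
qed

lemma decomp:
  fixes S :: "'e set" and l x :: "'e \<Rightarrow> real" and M :: real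
  assumes "finite S"
  shows "(\<Sum>e\<in>S. l e * min (x e) M) = (\<Sum>e\<in>{e\<in>S. x e < M}. l e * min (x e) M) + M * (\<Sum>e\<in>{e\<in>S. x e \<ge> M}. l e)"
  unfolding sum.inter_filter[OF assms] sum_distrib_left sum.distrib[symmetric]
  by (rule sum.cong) (auto simp: min_def)

lemma fwd_in: "fwd C T0 i \<in> T0 ` {..i}"
  by (induction i) auto

lemma bwd_in: "bwd C T1 K n \<in> T1 ` {..K}"
  by (induction n) auto

lemma fwd_le: "C i (fwd C T0 i) \<le> C i (T0 i)"
  by (cases i) auto

lemma fwd_step: "C (Suc i) (fwd C T0 (Suc i)) \<le> C (Suc i) (fwd C T0 i)"
  by auto

lemma ft_step: "i < K \<Longrightarrow> final_trees C T0 K i =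
   (if C i (final_trees C T0 K (Suc i)) < C i (fwd C T0 i) then final_trees C T0 K (Suc i) else fwd C T0 i)"
proof -
  assume "i < K"
  then have e: "K - i = Suc (K - Suc i)" "K - Suc (K - Suc i) = i" by auto
  show ?thesis unfolding final_trees_def e(1) bwd.simps e(2) by simp
qed

lemma ft_K: "final_trees C T0 K K = fwd C T0 K"
  by (simp add: final_trees_def)

lemma ft_in: "final_trees C T0 K i \<in> T0 ` {..K}"
proof -
  obtain j where j: "j \<le> K" "final_trees C T0 K i = fwd C T0 j"
    using bwd_in[of C "fwd C T0" K "K - i"] unfolding final_trees_def by auto
  obtain m where "m \<le> j" "fwd C T0 j = T0 m" using fwd_in[of C T0 j] by auto
  then show ?thesis using j by auto
qed

lemma ft_le: "i \<le> K \<Longrightarrow> C i (final_trees C T0 K i) \<le> C i (T0 i)"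
proof -
  assume "i \<le> K"
  have "C i (final_trees C T0 K i) \<le> C i (fwd C T0 i)"
  proof (cases "i = K")
    case True then show ?thesis by (simp add: ft_K)
  next
    case False then show ?thesis using \<open>i \<le> K\<close> ft_step[of i K C T0] by auto
  qed
  then show ?thesis using fwd_le[of C i T0] by linarith
qed

lemma loc1: "i < K \<Longrightarrow> C i (final_trees C T0 K i) \<le> C i (final_trees C T0 K (Suc i))"
  using ft_step[of i K C T0] by auto

lemma loc2: "i < K \<Longrightarrow> C (Suc i) (final_trees C T0 K (Suc i)) \<le> C (Suc i) (final_trees C T0 K i)"
proof -
  assume a: "i < K"
  have h1: "C (Suc i) (final_trees C T0 K (Suc i)) \<le> C (Suc i) (fwd C T0 (Suc i))"
  proof (cases "Suc i = K")
    case True then show ?thesis by (simp add: ft_K)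
  next
    case False then show ?thesis using a ft_step[of "Suc i" K C T0] by auto
  qed
  show ?thesis
  proof (cases "C i (final_trees C T0 K (Suc i)) < C i (fwd C T0 i)")
    case True then show ?thesis using ft_step[OF a, of C T0] by simp
  next
    case False
    then have "final_trees C T0 K i = fwd C T0 i" using ft_step[OF a, of C T0] by simp
    then show ?thesis using h1 fwd_step[of C i T0] by (metis order_trans)
  qed
qed

lemma chain_dec: "(\<forall>i<K. g (Suc i) \<le> (g i::real)) \<Longrightarrow> j \<le> j' \<Longrightarrow> j' \<le> K \<Longrightarrow> g j' \<le> g j"
proof (induction j')
  case 0 then show ?case by simp
next
  case (Suc n)
  then show ?case
  proof (cases "j = Suc n")
    case False
    then have "g n \<le> g j" using Suc by auto
    moreover have "g (Suc n) \<le> g n" using Suc.prems by auto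
    ultimately show ?thesis by linarith
  qed simp
qed

lemma chain_inc: "(\<forall>i<K. g i \<le> (g (Suc i)::real)) \<Longrightarrow> j \<le> j' \<Longrightarrow> j' \<le> K \<Longrightarrow> g j \<le> g j'"
  using chain_dec[of K "\<lambda>i. - g i" j j'] by simp

lemma min_nat_le: "M \<ge> 1 \<Longrightarrow> min (real n) M \<le> M * min (real n) 1"
  by (cases n) auto



theorem lemma5:
  fixes V :: "'a set" and E :: "'a set set" and l :: "'a set \<Rightarrow> real"
    and r :: 'a and Dem :: "'a set" and d :: "'a \<Rightarrow> nat"
    and \<epsilon> \<gamma> \<delta> lam :: real and K :: nat
    and Tstar T0 :: "nat \<Rightarrow> 'a set set"
    and T :: "'a set set" and cB cR :: real
  assumes finV: "finite V"
    and E_edges: "E \<subseteq> {e. e \<subseteq> V \<and> card e = 2}"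
    and l_nonneg: "\<forall>e\<in>E. l e \<ge> 0"
    and r_in: "r \<in> V"
    and Dem_sub: "Dem \<subseteq> V" and Dem_ne: "Dem \<noteq> {}"
    and d_pos: "\<forall>v\<in>Dem. d v > 0"
    and eps: "\<epsilon> > 0" and gam: "\<gamma> > 1" and del: "\<delta> > 1"
    and K_def: "K = nat \<lceil>log (1 + \<epsilon>) (real (\<Sum>v\<in>Dem. d v))\<rceil>"
    and Tstar_opt: "\<forall>i\<le>K. routing_tree E r Dem (Tstar i) \<and>
         (\<forall>T'. routing_tree E r Dem T' \<longrightarrow>
            cost r Dem d l (Acost \<epsilon> i) (Tstar i) \<le> cost r Dem d l (Acost \<epsilon> i) T')"
    and T0_approx: "\<forall>i\<le>K. routing_tree E r Dem (T0 i) \<and>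
         (\<forall>T'. routing_tree E r Dem T' \<longrightarrow>
            cost r Dem d l (Acost \<epsilon> i) (T0 i) \<le> lam * cost r Dem d l (Acost \<epsilon> i) T')"
    and T_tree: "routing_tree E r Dem T"
    and hyp: "let C = (\<lambda>i S. cost r Dem d l (Acost \<epsilon> i) S);
                  Tf = final_trees C T0 K;
                  Rv = (\<lambda>i. \<Sum>e\<in>{e\<in>Tf i. flow r Dem d (Tf i) e < Mth \<epsilon> i}.
                           l e * Acost \<epsilon> i (flow r Dem d (Tf i) e));
                  Bv = (\<lambda>i. \<Sum>e\<in>{e\<in>Tf i. flow r Dem d (Tf i) e \<ge> Mth \<epsilon> i}. l e);
                  LB = scan Bv \<gamma> None [0..<K+1];
                  L = scan Rv \<delta> None (rev LB)
              in \<forall>i\<in>set L. \<exists>TB TR. TB \<union> TR = T \<and> TB \<inter> TR = {} \<and>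
                    costS r Dem d l (Acost \<epsilon> 0) T TB \<le> cB * Bv i \<and>
                    costS r Dem d l (Acost \<epsilon> K) T TR \<le> cR * Rv i"
  shows "\<forall>k\<le>K. cost r Dem d l (Acost \<epsilon> k) T
                \<le> max (cB * \<gamma>) (cR * \<delta>) * lam * cost r Dem d l (Acost \<epsilon> k) (Tstar k)"
proof -
  define C where "C = (\<lambda>i S. cost r Dem d l (Acost \<epsilon> i) S)"
  define Tf where "Tf = final_trees C T0 K"
  define Rv where "Rv = (\<lambda>i. \<Sum>e\<in>{e\<in>Tf i. flow r Dem d (Tf i) e < Mth \<epsilon> i}.
                           l e * Acost \<epsilon> i (flow r Dem d (Tf i) e))"
  define Bv where "Bv = (\<lambda>i. \<Sum>e\<in>{e\<in>Tf i. flow r Dem d (Tf i) e \<ge> Mth \<epsilon> i}. l e)"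
  define LB where "LB = scan Bv \<gamma> None [0..<K+1]"
  define L where "L = scan Rv \<delta> None (rev LB)"
  have H: "\<forall>i\<in>set L. \<exists>TB TR. TB \<union> TR = T \<and> TB \<inter> TR = {} \<and>
                    costS r Dem d l (Acost \<epsilon> 0) T TB \<le> cB * Bv i \<and>
                    costS r Dem d l (Acost \<epsilon> K) T TR \<le> cR * Rv i"
    using hyp unfolding Let_def C_def Tf_def Rv_def Bv_def LB_def L_def by simp
  have Mpos: "\<And>i. Mth \<epsilon> i > 0" using eps by (simp add: Mth_def)
  have Mlt: "\<And>i. Mth \<epsilon> i < Mth \<epsilon> (Suc i)" using eps Mpos by (simp add: Mth_def)
  have Mmono: "\<And>i j. i \<le> j \<Longrightarrow> Mth \<epsilon> i \<le> Mth \<epsilon> j"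
    unfolding Mth_def using eps by (intro power_increasing) auto
  have M0: "Mth \<epsilon> 0 = 1" by (simp add: Mth_def)
  have Mge1: "\<And>i. Mth \<epsilon> i \<ge> 1" using Mmono[of 0] M0 by simp
  have flow_nat: "\<And>S e. flow r Dem d S e = real (\<Sum>v\<in>Dem. if conn (S - {e}) v r then 0 else d v)"
    by (simp add: flow_def of_nat_sum if_distrib cong: if_cong)
  have flow_nn: "\<And>S e. flow r Dem d S e \<ge> 0" unfolding flow_def by (auto intro: sum_nonneg)
  have rt_fin: "\<And>S. routing_tree E r Dem S \<Longrightarrow> finite S \<and> (\<forall>e\<in>S. l e \<ge> 0)"
    using l_nonneg unfolding routing_tree_def by auto
  have Tf_rt: "\<And>i. routing_tree E r Dem (Tf i)"
  proof -
    fix i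
    obtain m where "m \<le> K" "Tf i = T0 m" using ft_in[of C T0 K i] unfolding Tf_def by auto
    then show "routing_tree E r Dem (Tf i)" using T0_approx by auto
  qed
  have Cdef: "\<And>i S. C i S = (\<Sum>e\<in>S. l e * min (flow r Dem d S e) (Mth \<epsilon> i))"
    by (simp add: C_def costS_def Acost_def)
  have Rvdef: "\<And>i. Rv i = (\<Sum>e\<in>{e\<in>Tf i. flow r Dem d (Tf i) e < Mth \<epsilon> i}.
                           l e * min (flow r Dem d (Tf i) e) (Mth \<epsilon> i))"
    by (simp add: Rv_def Acost_def)
  have Cdec: "\<And>i. C i (Tf i) = Rv i + Mth \<epsilon> i * Bv i"
    unfolding Cdef Rvdef Bv_def by (rule decomp) (use rt_fin[OF Tf_rt] in blast)
  have Bnn: "\<And>i. Bv i \<ge> 0" unfolding Bv_def using rt_fin[OF Tf_rt] by (auto intro: sum_nonneg)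
  have Rnn: "\<And>i. Rv i \<ge> 0" unfolding Rvdef using rt_fin[OF Tf_rt] flow_nn Mpos
    by (auto intro!: sum_nonneg mult_nonneg_nonneg)
  have BR: "\<And>i. i < K \<Longrightarrow> Bv (Suc i) \<le> Bv i \<and> Rv i \<le> Rv (Suc i)"
  proof -
    fix i assume i: "i < K"
    have o1: "C i (Tf i) \<le> C i (Tf (Suc i))" using loc1[OF i] unfolding Tf_def .
    have o2: "C (Suc i) (Tf (Suc i)) \<le> C (Suc i) (Tf i)" using loc2[OF i] unfolding Tf_def .
    show "Bv (Suc i) \<le> Bv i \<and> Rv i \<le> Rv (Suc i)"
      unfolding Bv_def Rvdef
    proof (rule conjI; rule mono_B_R[of "Tf i" "Tf (Suc i)" l "flow r Dem d (Tf i)" "flow r Dem d (Tf (Suc i))"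
          "Mth \<epsilon> i" "Mth \<epsilon> (Suc i)"])
    qed (use o1 o2 rt_fin[OF Tf_rt] flow_nn Mpos Mlt in \<open>simp_all add: Cdef\<close>)
  qed
  have Bdec: "\<And>j j'. j \<le> j' \<Longrightarrow> j' \<le> K \<Longrightarrow> Bv j' \<le> Bv j"
    using chain_dec[of K Bv] BR by blast
  have Rinc: "\<And>j j'. j \<le> j' \<Longrightarrow> j' \<le> K \<Longrightarrow> Rv j \<le> Rv j'"
    using chain_inc[of K Rv] BR by blast
  have LBsub: "set LB \<subseteq> {..K}" unfolding LB_def using scan_subset[of Bv \<gamma> None "[0..<K+1]"] by auto
  have Lsub: "set L \<subseteq> set LB" unfolding L_def using scan_subset[of Rv \<delta> None "rev LB"] by auto
  have upts: "sorted_wrt (\<le>) [0..<K+1]" by (rule sorted_wrt_mono_rel[OF _ sorted_wrt_upt]) simp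
  have LBsorted: "sorted_wrt (\<le>) LB" unfolding LB_def
    by (rule scan_sorted) (rule upts)
  have cover: "\<And>k. k \<le> K \<Longrightarrow> \<exists>i\<in>set L. Bv i \<le> \<gamma> * Bv k \<and> Rv i \<le> \<delta> * Rv k"
  proof -
    fix k assume k: "k \<le> K"
    have "(\<exists>j\<in>set LB. j \<le> k \<and> Bv j \<le> \<gamma> * Bv k) \<or> (\<exists>t. (None::real option) = Some t \<and> t \<le> \<gamma> * Bv k)"
      unfolding LB_def
      apply (rule scan_cover)
      apply (use gam in simp)
      apply (use Bnn in simp)
      apply (rule upts)
      apply simp
      apply (simp only: set_upt atLeastLessThan_iff)
      apply (use k in linarith)
      done
    then obtain j where j: "j \<in> set LB" "j \<le> k" "Bv j \<le> \<gamma> * Bv k" by auto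
    have "(\<exists>i\<in>set L. i \<ge> j \<and> Rv i \<le> \<delta> * Rv j) \<or> (\<exists>t. (None::real option) = Some t \<and> t \<le> \<delta> * Rv j)"
      unfolding L_def
      apply (rule scan_cover[where Q="\<lambda>a b. b \<le> a"])
      apply (use del in simp)
      apply (use Rnn in simp)
      apply (use LBsorted in \<open>simp add: sorted_wrt_rev\<close>)
      apply simp
      apply (use j in simp)
      done
    then obtain i where i: "i \<in> set L" "i \<ge> j" "Rv i \<le> \<delta> * Rv j" by auto
    have iK: "i \<le> K" using i(1) Lsub LBsub by auto
    have "Bv i \<le> Bv j" using Bdec[OF i(2) iK] .
    moreover have "Rv j \<le> Rv k" using Rinc[OF j(2) k] .
    ultimately show "\<exists>i\<in>set L. Bv i \<le> \<gamma> * Bv k \<and> Rv i \<le> \<delta> * Rv k"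
      using i j del by (intro bexI[of _ i]) (auto intro: order_trans mult_left_mono)
  qed
  show ?thesis
  proof (intro allI impI)
    fix k assume k: "k \<le> K"
    define m where "m = max (cB * \<gamma>) (cR * \<delta>)"
    obtain i where i: "i \<in> set L" "Bv i \<le> \<gamma> * Bv k" "Rv i \<le> \<delta> * Rv k" using cover[OF k] by blast
    obtain TB TR where TP: "TB \<union> TR = T" "TB \<inter> TR = {}"
      "costS r Dem d l (Acost \<epsilon> 0) T TB \<le> cB * Bv i"
      "costS r Dem d l (Acost \<epsilon> K) T TR \<le> cR * Rv i"
    proof -
      from H i(1) have "\<exists>TB TR. TB \<union> TR = T \<and> TB \<inter> TR = {} \<and>
                    costS r Dem d l (Acost \<epsilon> 0) T TB \<le> cB * Bv i \<and>
                    costS r Dem d l (Acost \<epsilon> K) T TR \<le> cR * Rv i" by (rule bspec)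
      then show ?thesis using that by blast
    qed
    define X where "X = costS r Dem d l (Acost \<epsilon> 0) T TB"
    define Y where "Y = costS r Dem d l (Acost \<epsilon> K) T TR"
    have Tfin: "finite T" "\<forall>e\<in>T. l e \<ge> 0" using rt_fin[OF T_tree] by auto
    have finB: "finite TB" "finite TR" using TP(1) Tfin(1) by (auto intro: finite_subset)
    have split: "cost r Dem d l (Acost \<epsilon> k) T = costS r Dem d l (Acost \<epsilon> k) T TB + costS r Dem d l (Acost \<epsilon> k) T TR"
      unfolding costS_def using sum.union_disjoint[OF finB TP(2)] TP(1) by simp
    have XB: "costS r Dem d l (Acost \<epsilon> k) T TB \<le> Mth \<epsilon> k * X"
      unfolding X_def costS_def sum_distrib_left
    proof (rule sum_mono)
      fix e assume e: "e \<in> TB"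
      have le: "l e \<ge> 0" using e TP(1) Tfin by auto
      have "min (flow r Dem d T e) (Mth \<epsilon> k) \<le> Mth \<epsilon> k * min (flow r Dem d T e) 1"
        using flow_nat min_nat_le Mge1 by metis
      then show "l e * Acost \<epsilon> k (flow r Dem d T e) \<le> Mth \<epsilon> k * (l e * Acost \<epsilon> 0 (flow r Dem d T e))"
        using le unfolding Acost_def M0
        by (metis mult.left_commute mult_left_mono)
    qed
    have YR: "costS r Dem d l (Acost \<epsilon> k) T TR \<le> Y"
      unfolding Y_def costS_def
    proof (rule sum_mono)
      fix e assume e: "e \<in> TR"
      have le: "l e \<ge> 0" using e TP(1) Tfin by auto
      have "min (flow r Dem d T e) (Mth \<epsilon> k) \<le> min (flow r Dem d T e) (Mth \<epsilon> K)"
        using Mmono[OF k] by simp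
      then show "l e * Acost \<epsilon> k (flow r Dem d T e) \<le> l e * Acost \<epsilon> K (flow r Dem d T e)"
        using le unfolding Acost_def by (rule mult_left_mono)
    qed
    have Xnn: "X \<ge> 0" unfolding X_def costS_def Acost_def
      using TP(1) Tfin flow_nn Mpos by (auto intro!: sum_nonneg mult_nonneg_nonneg simp: less_imp_le)
    have Ynn: "Y \<ge> 0" unfolding Y_def costS_def Acost_def
      using TP(1) Tfin flow_nn Mpos by (auto intro!: sum_nonneg mult_nonneg_nonneg simp: less_imp_le)
    have LHS: "cost r Dem d l (Acost \<epsilon> k) T \<le> Mth \<epsilon> k * X + Y" using split XB YR by linarith
    have Ck: "C k (Tf k) \<le> lam * C k (Tstar k)"
    proof -
      have "C k (Tf k) \<le> C k (T0 k)" using ft_le[OF k, of C T0] unfolding Tf_def .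
      also have "\<dots> \<le> lam * C k (Tstar k)"
      proof -
        have "routing_tree E r Dem (Tstar k)" using Tstar_opt k by simp
        then show ?thesis using T0_approx k unfolding C_def by simp
      qed
      finally show ?thesis .
    qed
    have Cnn: "\<And>S. routing_tree E r Dem S \<Longrightarrow> C k S \<ge> 0"
      unfolding Cdef using rt_fin flow_nn Mpos by (auto intro!: sum_nonneg mult_nonneg_nonneg simp: less_imp_le)
    show "cost r Dem d l (Acost \<epsilon> k) T \<le> max (cB * \<gamma>) (cR * \<delta>) * lam * cost r Dem d l (Acost \<epsilon> k) (Tstar k)"
    proof (cases "m \<ge> 0")
      case True
      have X1: "X \<le> m * Bv k"
      proof (cases "cB \<ge> 0")
        case True
        have "X \<le> cB * Bv i" using TP(3) X_def by simp
        also have "\<dots> \<le> cB * (\<gamma> * Bv k)" using i(2) True by (rule mult_left_mono)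
        also have "\<dots> \<le> m * Bv k" using Bnn[of k] unfolding m_def
          by (simp add: mult.assoc[symmetric] mult_right_mono)
        finally show ?thesis .
      next
        case False
        have "X \<le> cB * Bv i" using TP(3) X_def by simp
        also have "\<dots> \<le> 0" using False Bnn[of i] by (simp add: mult_nonpos_nonneg)
        also have "0 \<le> m * Bv k" using \<open>m \<ge> 0\<close> Bnn[of k] by simp
        finally show ?thesis .
      qed
      have Y1: "Y \<le> m * Rv k"
      proof (cases "cR \<ge> 0")
        case True
        have "Y \<le> cR * Rv i" using TP(4) Y_def by simp
        also have "\<dots> \<le> cR * (\<delta> * Rv k)" using i(3) True by (rule mult_left_mono)
        also have "\<dots> \<le> m * Rv k" using Rnn[of k] unfolding m_def
          by (simp add: mult.assoc[symmetric] mult_right_mono)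
        finally show ?thesis .
      next
        case False
        have "Y \<le> cR * Rv i" using TP(4) Y_def by simp
        also have "\<dots> \<le> 0" using False Rnn[of i] by (simp add: mult_nonpos_nonneg)
        also have "0 \<le> m * Rv k" using \<open>m \<ge> 0\<close> Rnn[of k] by simp
        finally show ?thesis .
      qed
      have "cost r Dem d l (Acost \<epsilon> k) T \<le> Mth \<epsilon> k * (m * Bv k) + m * Rv k"
        using LHS X1 Y1 Mpos[of k] by (smt (verit) mult_left_mono)
      also have "\<dots> = m * C k (Tf k)" using Cdec[of k] by (simp add: algebra_simps)
      also have "\<dots> \<le> m * (lam * C k (Tstar k))" using Ck True by (rule mult_left_mono)
      finally show ?thesis unfolding m_def C_def by (simp add: mult.assoc)
    next
      case False
      then have mneg: "cB * \<gamma> < 0" "cR * \<delta> < 0" unfolding m_def by auto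
      have neg: "cB < 0" "cR < 0"
        using mneg gam del by (simp_all add: mult_less_0_iff)
      have "X \<le> cB * Bv i" using TP(3) X_def by simp
      then have Bi0: "Bv i = 0" using Xnn Bnn[of i] neg(1)
        by (smt (verit) mult_neg_pos)
      have "Y \<le> cR * Rv i" using TP(4) Y_def by simp
      then have Ri0: "Rv i = 0" using Ynn Rnn[of i] neg(2)
        by (smt (verit) mult_neg_pos)
      have X0: "X = 0" using Xnn \<open>X \<le> cB * Bv i\<close> Bi0 by simp
      have Y0: "Y = 0" using Ynn \<open>Y \<le> cR * Rv i\<close> Ri0 by simp
      have Ci0: "C i (Tf i) = 0" using Cdec[of i] Bi0 Ri0 by simp
      have tnn: "\<forall>e\<in>Tf i. 0 \<le> l e * min (flow r Dem d (Tf i) e) (Mth \<epsilon> i)"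
        using rt_fin[OF Tf_rt[of i]] flow_nn Mpos by (auto intro!: mult_nonneg_nonneg simp: less_imp_le)
      have terms0: "\<forall>e\<in>Tf i. l e * min (flow r Dem d (Tf i) e) (Mth \<epsilon> i) = 0"
        using Ci0 sum_nonneg_eq_0_iff[of "Tf i" "\<lambda>e. l e * min (flow r Dem d (Tf i) e) (Mth \<epsilon> i)"]
          rt_fin[OF Tf_rt[of i]] tnn unfolding Cdef by blast
      have "C k (Tf i) = 0" unfolding Cdef
      proof (rule sum.neutral, rule ballI)
        fix e assume e: "e \<in> Tf i"
        have "l e = 0 \<or> min (flow r Dem d (Tf i) e) (Mth \<epsilon> i) = 0" using terms0 e by simp
        then have "l e = 0 \<or> flow r Dem d (Tf i) e = 0" using Mpos[of i]
          by (auto simp: min_def split: if_splits)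
        then show "l e * min (flow r Dem d (Tf i) e) (Mth \<epsilon> k) = 0" using Mpos[of k] by (auto simp: min_def)
      qed
      then have "C k (Tstar k) \<le> 0" using Tstar_opt k Tf_rt[of i] unfolding C_def by metis
      then have "C k (Tstar k) = 0" using Cnn[of "Tstar k"] Tstar_opt k by fastforce
      then show ?thesis using LHS X0 Y0 unfolding C_def by simp
    qed
  qed
qed

end
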